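(* Let $\{X_n\}$ be the Bessel-like walk of the context. There exists a constant $K_2>0$ (depending only on the transition probabilities) such that for all integers $h\ge1$, $m\ge 2h^2$ and $0<q<h$, \[ P_q\big(X_n\in(0,h)\text{ for all } n\le m\big)\le e^{-K_2m/h^2}. \]
   Context: Let $\{X_n\}_{n\ge0}$ be a Markov chain on $\mathbb{Z}_+=\{0,1,2,\dots\}$ with steps $\pm1$, reflecting at $0$, and for $x\ge1$ transition probabilities $p_x=p(x,x+1)$, $q_x=p(x,x-1)=1-p_x$. A drift parameter $\delta\ge-1$ is fixed and $R_x$ is defined by $p_x=\frac12\left(1-\frac{\delta}{2x}+\frac{R_x}{2}\right)$, where $R_x=o(1/x)$ as $x\to\infty$. Uniform ellipticity: there is $\epsilon>0$ with $p_x,q_x\in[\epsilon,1-\epsilon]$ for all $x\ge1$. The walk is assumed recurrent (for $\delta>-1$ this is automatic). $P_q$ denotes the law of the chain started at $q$. *)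

theory Defs
  imports "HOL-Analysis.Analysis" "HOL-Library.Landau_Symbols"
begin

text \<open>Nearest-neighbour walk on the nonnegative integers, reflecting at 0:
  from 0 it moves to 1 with probability 1; from x \<ge> 1 it moves to x+1 with
  probability p x and to x-1 with probability 1 - p x.\<close>

text \<open>stay_prob p A m x = P_x(X_n \<in> A for all n \<le> m), computed by the Markov
  property (first-step decomposition) of the walk.\<close>
fun stay_prob :: "(nat \<Rightarrow> real) \<Rightarrow> nat set \<Rightarrow> nat \<Rightarrow> nat \<Rightarrow> real" where
  "stay_prob p A 0 x = (if x \<in> A then 1 else 0)"
| "stay_prob p A (Suc m) x =
     (if x \<in> A then
        (if x = 0 then stay_prob p A m 1
         else p x * stay_prob p A m (Suc x) + (1 - p x) * stay_prob p A m (x - 1))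
      else 0)"

text \<open>hit0_prob p m x = P_x(X_n = 0 for some n \<le> m).\<close>
fun hit0_prob :: "(nat \<Rightarrow> real) \<Rightarrow> nat \<Rightarrow> nat \<Rightarrow> real" where
  "hit0_prob p 0 x = (if x = 0 then 1 else 0)"
| "hit0_prob p (Suc m) x =
     (if x = 0 then 1
      else p x * hit0_prob p m (Suc x) + (1 - p x) * hit0_prob p m (x - 1))"

text \<open>Recurrence: starting from 0 the walk returns to 0 almost surely.
  Since the first step from 0 goes to 1, this means P_1(hit 0 eventually) = 1.\<close>
definition recurrent_walk :: "(nat \<Rightarrow> real) \<Rightarrow> bool" where
  "recurrent_walk p \<longleftrightarrow> (\<lambda>m. hit0_prob p m 1) \<longlonglongrightarrow> 1"

end

theory Submission
  imports Defs
begin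

lemma cosh_lb: fixes u::real assumes "0 \<le> u" shows "1 + u^2/2 \<le> cosh u"
proof -
  have "(\<lambda>x. cosh x - x^2/2) 0 \<le> (\<lambda>x. cosh x - x^2/2) u"
  proof (rule DERIV_nonneg_imp_nondecreasing[OF assms])
    fix x :: real assume x: "0 \<le> x" "x \<le> u"
    have d: "((\<lambda>x. cosh x - x^2/2) has_real_derivative (sinh x - x)) (at x)"
      by (rule derivative_eq_intros refl | simp)+
    have "x \<le> (exp x - inverse(exp x)) / 2" using real_le_x_sinh[of x] x by auto
    hence "0 \<le> sinh x - x" by (simp add: sinh_field_def exp_minus)
    with d show "\<exists>y. ((\<lambda>x. cosh x - x^2/2) has_real_derivative y) (at x) \<and> 0 \<le> y" by blast
  qed
  thus ?thesis by simp
qed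
lemma sinh_le_cosh_mult: fixes a::real assumes "0 \<le> a" shows "sinh a \<le> a * cosh a"
proof -
  have "(\<lambda>x. x * cosh x - sinh x) 0 \<le> (\<lambda>x. x * cosh x - sinh x) a"
  proof (rule DERIV_nonneg_imp_nondecreasing[OF assms])
    fix x :: real assume x: "0 \<le> x" "x \<le> a"
    have d: "((\<lambda>x. x * cosh x - sinh x) has_real_derivative (x * sinh x)) (at x)"
      by (rule derivative_eq_intros refl | simp)+
    have "0 \<le> x * sinh x" using x by simp
    with d show "\<exists>y. ((\<lambda>x. x * cosh x - sinh x) has_real_derivative y) (at x) \<and> 0 \<le> y" by blast
  qed
  thus ?thesis by simp
qed
lemma cosh1_le2: "cosh (1::real) \<le> 2"
proof -
  have "exp (1::real) \<le> 3" using exp_le by simp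
  moreover have "exp (-1::real) \<le> 1" by simp
  ultimately show ?thesis by (simp add: cosh_field_def del: exp_le_one_iff)
qed
lemma sinh_le_2u: fixes u::real assumes "0 \<le> u" "u \<le> 1" shows "sinh u \<le> 2*u"
proof -
  have "cosh u \<le> cosh 1" using assms cosh_real_nonneg_le_iff by auto
  hence "cosh u \<le> 2" using cosh1_le2 by linarith
  thus ?thesis using sinh_le_cosh_mult[OF assms(1)] assms(1) mult_left_mono[of "cosh u" 2 u] by linarith
qed

lemma S_out: "x \<notin> A \<Longrightarrow> stay_prob p A n x = 0"
  by (cases n) auto

lemma S_in: "0 < x \<Longrightarrow> x < h \<Longrightarrow> stay_prob p {0<..<h} (Suc n) x =
   p x * stay_prob p {0<..<h} n (Suc x) + (1 - p x) * stay_prob p {0<..<h} n (x - 1)"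
  by simp

lemma S_bounds:
  assumes pr: "\<And>x. 0 < x \<Longrightarrow> 0 \<le> p x \<and> p x \<le> 1"
  shows "0 \<le> stay_prob p {0<..<h} n x \<and> stay_prob p {0<..<h} n x \<le> 1"
proof (induction n arbitrary: x)
  case 0 then show ?case by simp
next
  case (Suc n)
  show ?case
  proof (cases "0 < x \<and> x < h")
    case True
    have a: "0 \<le> stay_prob p {0<..<h} n (Suc x)" "stay_prob p {0<..<h} n (Suc x) \<le> 1"
        "0 \<le> stay_prob p {0<..<h} n (x-1)" "stay_prob p {0<..<h} n (x-1) \<le> 1" using Suc by auto
    have b: "0 \<le> p x" "p x \<le> 1" using pr True by auto
    have "0 \<le> p x * stay_prob p {0<..<h} n (Suc x) + (1 - p x) * stay_prob p {0<..<h} n (x - 1)"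
      using a b by simp
    moreover have "p x * stay_prob p {0<..<h} n (Suc x) + (1 - p x) * stay_prob p {0<..<h} n (x - 1) \<le> p x * 1 + (1 - p x) * 1"
      using a b by (intro add_mono mult_left_mono) auto
    ultimately show ?thesis using True by (simp only: S_in) simp
  next
    case False then show ?thesis by (subst S_out) auto
  qed
qed

lemma S_mult:
  assumes pr: "\<And>x. 0 < x \<Longrightarrow> 0 \<le> p x \<and> p x \<le> 1"
    and M: "\<And>y. stay_prob p {0<..<h} b y \<le> M"
  shows "stay_prob p {0<..<h} (a + b) x \<le> M * stay_prob p {0<..<h} a x"
proof (induction a arbitrary: x)
  case 0
  show ?case
  proof (cases "0 < x \<and> x < h")
    case True then show ?thesis using M[of x] by simp
  next
    case False then show ?thesis by (auto simp add: S_out)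
  qed
next
  case (Suc a)
  show ?case
  proof (cases "0 < x \<and> x < h")
    case True
    have b: "0 \<le> p x" "0 \<le> 1 - p x" using pr True by auto
    have "stay_prob p {0<..<h} (Suc a + b) x =
       p x * stay_prob p {0<..<h} (a+b) (Suc x) + (1 - p x) * stay_prob p {0<..<h} (a+b) (x - 1)"
      using True by simp
    also have "\<dots> \<le> p x * (M * stay_prob p {0<..<h} a (Suc x)) + (1 - p x) * (M * stay_prob p {0<..<h} a (x - 1))"
      using b Suc by (intro add_mono mult_left_mono) auto
    also have "\<dots> = M * stay_prob p {0<..<h} (Suc a) x" using True by (simp add: algebra_simps)
    finally show ?thesis .
  next
    case False
    hence nx: "x \<notin> {0<..<h}" by auto
    have "stay_prob p {0<..<h} (Suc a + b) x = 0" "stay_prob p {0<..<h} (Suc a) x = 0"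
      using S_out[OF nx] by blast+
    thus ?thesis by simp
  qed
qed

lemma S_mono:
  assumes pr: "\<And>x. 0 < x \<Longrightarrow> 0 \<le> p x \<and> p x \<le> 1" and "a \<le> c"
  shows "stay_prob p {0<..<h} c x \<le> stay_prob p {0<..<h} a x"
proof -
  obtain b where c: "c = a + b" using assms(2) le_Suc_ex by blast
  show ?thesis unfolding c using S_mult[OF pr, where b=b and M=1 and a=a and x=x] S_bounds[where p=p, OF pr] by auto
qed

lemma S_pow:
  assumes pr: "\<And>x. 0 < x \<Longrightarrow> 0 \<le> p x \<and> p x \<le> 1"
    and M: "\<And>y. stay_prob p {0<..<h} b y \<le> M"
  shows "stay_prob p {0<..<h} (j * b) x \<le> M ^ j"
proof (induction j arbitrary: x)
  case 0 then show ?case using S_bounds[where p=p, OF pr] by simp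
next
  case (Suc j)
  have M0: "0 \<le> M" using M[of 0] by (simp add: S_out)
  have "stay_prob p {0<..<h} (Suc j * b) x = stay_prob p {0<..<h} (j * b + b) x" by (simp add: add.commute)
  also have "\<dots> \<le> M * stay_prob p {0<..<h} (j*b) x" by (rule S_mult[OF pr M])
  also have "\<dots> \<le> M * M ^ j" using Suc M0 by (intro mult_left_mono) auto
  finally show ?case by simp
qed

lemma S_ellip:
  assumes pr: "\<And>x. 0 < x \<Longrightarrow> 0 \<le> p x \<and> p x \<le> 1"
    and ep: "\<And>x. 0 < x \<Longrightarrow> \<epsilon> \<le> p x" and e0: "0 \<le> \<epsilon>"
  shows "h \<le> x + n \<Longrightarrow> stay_prob p {0<..<h} n x \<le> 1 - \<epsilon> ^ n"
proof (induction n arbitrary: x)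
  case 0 then show ?case by (simp add: S_out)
next
  case (Suc n)
  show ?case
  proof (cases "0 < x \<and> x < h")
    case True
    have b: "\<epsilon> \<le> p x" "0 \<le> 1 - p x" using pr ep True by auto
    have i1: "stay_prob p {0<..<h} n (Suc x) \<le> 1 - \<epsilon> ^ n" using Suc by auto
    have i2: "stay_prob p {0<..<h} n (x-1) \<le> 1" using S_bounds[where p=p, OF pr] by auto
    have "stay_prob p {0<..<h} (Suc n) x =
       p x * stay_prob p {0<..<h} n (Suc x) + (1 - p x) * stay_prob p {0<..<h} n (x - 1)"
      using True by simp
    also have "\<dots> \<le> p x * (1 - \<epsilon> ^ n) + (1 - p x) * 1"
      using b i1 i2 e0 by (intro add_mono mult_left_mono) auto
    also have "\<dots> = 1 - p x * \<epsilon> ^ n" by algebra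
    also have "\<dots> \<le> 1 - \<epsilon> * \<epsilon> ^ n" using b e0 by (simp add: mult_right_mono)
    finally show ?thesis by simp
  next
    case False
    hence nx: "x \<notin> {0<..<h}" by auto
    have "\<epsilon> \<le> 1" using ep[of 1] pr[of 1] by simp
    hence "\<epsilon> ^ Suc n \<le> 1" by (rule power_le_one[OF e0])
    moreover have "stay_prob p {0<..<h} (Suc n) x = 0" by (rule S_out[OF nx])
    ultimately show ?thesis by linarith
  qed
qed

lemma S_stop:
  assumes pr: "\<And>x. 0 < x \<Longrightarrow> 0 \<le> p x \<and> p x \<le> 1"
    and th: "1 \<le> \<theta>" and Fm: "\<And>x. x \<le> h \<Longrightarrow> F x \<le> Fm" and Fm0: "0 \<le> Fm"
    and sub: "\<And>x. 0 < x \<Longrightarrow> x < h \<Longrightarrow> \<theta> * F x \<le> p x * F (Suc x) + (1 - p x) * F (x - 1)"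
  shows "x \<le> h \<Longrightarrow> F x \<le> Fm * (1 - (1 - 1 / \<theta> ^ n) * stay_prob p {0<..<h} n x)"
proof (induction n arbitrary: x)
  case 0 then show ?case using Fm by (simp add: S_out)
next
  case (Suc n)
  show ?case
  proof (cases "0 < x \<and> x < h")
    case True
    define s where "s = stay_prob p {0<..<h} (Suc n) x"
    define c where "c = 1 - 1 / \<theta> ^ n"
    have b: "0 \<le> p x" "0 \<le> 1 - p x" using pr True by auto
    have s_eq: "s = p x * stay_prob p {0<..<h} n (Suc x) + (1 - p x) * stay_prob p {0<..<h} n (x - 1)"
      using True by (simp add: s_def)
    have "\<theta> * F x \<le> p x * F (Suc x) + (1 - p x) * F (x - 1)" using sub True by auto
    also have "\<dots> \<le> p x * (Fm * (1 - c * stay_prob p {0<..<h} n (Suc x))) + (1 - p x) * (Fm * (1 - c * stay_prob p {0<..<h} n (x-1)))"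
      using b Suc True unfolding c_def by (intro add_mono mult_left_mono) auto
    also have "\<dots> = Fm * (1 - c * s)" unfolding s_eq by (simp add: algebra_simps)
    finally have A: "\<theta> * F x \<le> Fm * (1 - c * s)" .
    have sb: "0 \<le> s \<and> s \<le> 1" unfolding s_def by (rule S_bounds[where p=p, OF pr])
    hence s01: "0 \<le> s" "s \<le> 1" by auto
    have t0: "0 < \<theta>" using th by simp
    have key: "Fm * (1 - c * s) \<le> \<theta> * (Fm * (1 - (1 - 1 / \<theta> ^ Suc n) * s))"
    proof -
      have "\<theta> * (1 - (1 - 1 / \<theta> ^ Suc n) * s) - (1 - c * s) = (\<theta> - 1) * (1 - s)"
        unfolding c_def using t0 by (simp add: field_simps)
      also have "\<dots> \<ge> 0" using th s01 by simp
      finally have "1 - c * s \<le> \<theta> * (1 - (1 - 1 / \<theta> ^ Suc n) * s)" by simp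
      from mult_left_mono[OF this Fm0] show ?thesis by (metis mult.left_commute)
    qed
    from A key have "\<theta> * F x \<le> \<theta> * (Fm * (1 - (1 - 1 / \<theta> ^ Suc n) * s))" by linarith
    hence "F x \<le> Fm * (1 - (1 - 1 / \<theta> ^ Suc n) * s)" using t0 by simp
    then show ?thesis by (simp add: s_def)
  next
    case False
    hence nx: "x \<notin> {0<..<h}" by auto
    have "stay_prob p {0<..<h} (Suc n) x = 0" using S_out[OF nx] by blast
    thus ?thesis using Fm Suc.prems by simp
  qed
qed

lemma large_h:
  fixes p f :: "nat \<Rightarrow> real" and \<epsilon> lam :: real and h N :: nat
  assumes pr: "\<And>x. 0 < x \<Longrightarrow> \<epsilon> \<le> p x \<and> p x \<le> 1 - \<epsilon>" and e0: "0 < \<epsilon>"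
    and lam8: "8 \<le> lam" and lamL: "ln (1 + (4/\<epsilon>)^N) + 1 \<le> lam"
    and hl: "lam \<le> real h"
    and fb: "\<And>x. x \<le> h \<Longrightarrow> exp (-lam) \<le> f x \<and> f x \<le> exp lam"
    and good: "\<And>x. N \<le> x \<Longrightarrow> 0 < x \<Longrightarrow> x < h \<Longrightarrow>
        (1 + (lam / real h)^2 / 4) * f x \<le> p x * f (Suc x) + (1 - p x) * f (x - 1)"
  shows "stay_prob p {0<..<h} (2 * h^2) y \<le> 1 - exp (-2*lam) / (1 + (4/\<epsilon>)^N) / 2"
proof -
  have pr01: "0 \<le> p x \<and> p x \<le> 1" if "0 < x" for x using pr[OF that] e0 by linarith
  define u where "u = lam / real h"
  define th where "th = 1 + u^2/4"
  define mu where "mu = \<epsilon> / 4"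
  define K where "K = exp lam * (4/\<epsilon>)^N"
  define F where "F x = f x + K * mu^x" for x
  define Fm where "Fm = exp lam + K"
  define a0 where "a0 = exp (-2*lam) / (1 + (4/\<epsilon>)^N)"
  define n where "n = 2 * h^2"
  have hpos: "0 < real h" using hl lam8 by linarith
  have u0: "0 \<le> u" "u \<le> 1" unfolding u_def using hl lam8 hpos by (auto simp: field_simps)
  have th1: "1 \<le> th" "th \<le> 5/4" unfolding th_def using u0 power_le_one[of u 2] by auto
  have mu: "0 < mu" "mu \<le> 1" unfolding mu_def using e0 pr[of 1] by auto
  have Kpos: "0 < K" unfolding K_def using e0 by simp
  have KmuN: "K * mu^N = exp lam" unfolding K_def mu_def using e0
    by (simp add: power_mult_distrib[symmetric])
  have fpos: "\<And>x. x \<le> h \<Longrightarrow> 0 \<le> f x" using fb by (meson exp_ge_zero order_trans)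
  have sub: "th * F x \<le> p x * F (Suc x) + (1 - p x) * F (x - 1)" if x: "0 < x" "x < h" for x
  proof -
    have q: "\<epsilon> \<le> 1 - p x" "0 \<le> p x" using pr[OF x(1)] e0 by auto
    have mux: "mu^x = mu * mu^(x-1)" using x(1) by (cases x) auto
    have Kq: "4 * (K * mu^x) \<le> (1 - p x) * (K * mu^(x-1))"
    proof -
      have "4 * (K * mu^x) = (4 * mu) * (K * mu^(x-1))" unfolding mux by (simp add: algebra_simps)
      also have "\<dots> = \<epsilon> * (K * mu^(x-1))" unfolding mu_def by simp
      also have "\<dots> \<le> (1 - p x) * (K * mu^(x-1))" using q Kpos mu by (intro mult_right_mono) auto
      finally show ?thesis .
    qed
    have Kp: "0 \<le> p x * (K * mu^Suc x)" using q Kpos mu by simp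
    have fx: "0 \<le> p x * f (Suc x) + (1 - p x) * f (x - 1)"
    proof -
      have "0 \<le> f (Suc x)" "0 \<le> f (x - 1)" using fpos x by auto
      moreover have "0 \<le> 1 - p x" using q e0 by linarith
      ultimately show ?thesis using q by simp
    qed
    have eq: "p x * F (Suc x) + (1 - p x) * F (x - 1) =
      (p x * f (Suc x) + (1 - p x) * f (x - 1)) + (p x * (K * mu^Suc x) + (1 - p x) * (K * mu^(x-1)))"
      unfolding F_def by (simp add: algebra_simps)
    have Kmx: "0 \<le> K * mu^x" using Kpos mu by simp
    show ?thesis
    proof (cases "N \<le> x")
      case True
      have "th * F x = th * f x + th * (K * mu^x)" unfolding F_def by (simp add: algebra_simps)
      also have "\<dots> \<le> (p x * f (Suc x) + (1 - p x) * f (x - 1)) + 4 * (K * mu^x)"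
        using good[OF True x] th1 Kmx unfolding th_def u_def
        by (intro add_mono mult_right_mono) auto
      finally show ?thesis using eq Kq Kp by linarith
    next
      case False
      have "K * mu^N \<le> K * mu^x" using False mu Kpos by (intro mult_left_mono power_decreasing) auto
      hence e1: "exp lam \<le> K * mu^x" using KmuN by simp
      have fx1: "f x \<le> exp lam" using fb x by auto
      have "th * F x = th * f x + th * (K * mu^x)" unfolding F_def by (simp add: algebra_simps)
      also have "\<dots> \<le> 5/4 * exp lam + 5/4 * (K * mu^x)"
        using th1 fx1 fpos[of x] x Kmx Kpos mu by (intro add_mono mult_mono) auto
      finally show ?thesis using eq Kq Kp fx e1 Kmx by linarith
    qed
  qed
  have Fle: "F x \<le> Fm" if "x \<le> h" for x
  proof -
    have "mu^x \<le> 1" using mu by (simp add: power_le_one)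
    hence "K * mu^x \<le> K" using Kpos by (simp add: mult_left_le)
    thus ?thesis unfolding F_def Fm_def using fb[OF that] by linarith
  qed
  have Fge: "exp (-lam) \<le> F x" if "x \<le> h" for x
    unfolding F_def using fb[OF that] Kpos mu by (simp add: add_increasing2)
  have Fm0: "0 \<le> Fm" unfolding Fm_def using Kpos by simp
  have Fmeq: "exp (-lam) / Fm = a0"
  proof -
    have "Fm = exp lam * (1 + (4/\<epsilon>)^N)" unfolding Fm_def K_def by (simp add: algebra_simps)
    moreover have "exp(-2*lam) = exp(-lam) / exp lam" by (subst exp_diff[symmetric]) simp
    ultimately show ?thesis unfolding a0_def by simp
  qed
  have a0pos: "0 < a0" "a0 \<le> 1"
  proof -
    show "0 < a0" unfolding a0_def using e0 by (simp add: add_pos_nonneg)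
    have "exp (-2*lam) \<le> 1" using lam8 by simp
    moreover have "1 \<le> 1 + (4/\<epsilon>)^N" using e0 by simp
    ultimately have "exp (-2*lam) \<le> 1 + (4/\<epsilon>)^N" by linarith
    moreover have "0 < 1 + (4/\<epsilon>)^N" using e0 by (simp add: add_pos_nonneg)
    ultimately show "a0 \<le> 1" unfolding a0_def by (simp add: divide_le_eq del: exp_le_one_iff)
  qed
  have thn: "1 / th^n \<le> a0 / 2"
  proof -
    define v where "v = u^2/4"
    have v: "0 \<le> v" "v \<le> 1/4" unfolding v_def using u0 power_le_one[of u 2] by auto
    have "v - v^2 \<le> ln th" unfolding th_def v_def[symmetric] by (rule ln_one_plus_pos_lower_bound) (use v in auto)
    moreover have "3/4 * v \<le> v - v^2" 
    proof -
      have "v * v \<le> 1/4 * v" using v by (intro mult_right_mono) auto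
      thus ?thesis by (simp add: power2_eq_square)
    qed
    ultimately have lt: "3/4 * v \<le> ln th" by linarith
    have nv: "real n * v = lam^2 / 2" unfolding n_def v_def u_def using hpos by (simp add: field_simps power2_eq_square)
    have "3 * lam^2 / 8 = real n * (3/4 * v)" using nv by (simp add: algebra_simps)
    also have "\<dots> \<le> real n * ln th" using lt by (intro mult_left_mono) auto
    also have "\<dots> = ln (th^n)" by (simp add: ln_realpow)
    finally have l1: "3 * lam^2 / 8 \<le> ln (th^n)" .
    have "3 * lam \<le> 3 * lam^2 / 8" using lam8 by (simp add: power2_eq_square mult_right_mono[of 8 lam lam])
    moreover have "ln 2 \<le> (1::real)" using ln_2_less_1 by simp
    ultimately have LL: "ln 2 + 2*lam + ln (1 + (4/\<epsilon>)^N) \<le> ln (th^n)" using l1 lamL by linarith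
    have "exp (ln 2 + 2*lam + ln (1 + (4/\<epsilon>)^N)) \<le> th^n"
    proof -
      have "exp (ln 2 + 2*lam + ln (1 + (4/\<epsilon>)^N)) \<le> exp (ln (th^n))" using LL by simp
      also have "exp (ln (th^n)) = th^n" using th1 by simp
      finally show ?thesis .
    qed
    hence "2 * exp (2*lam) * (1 + (4/\<epsilon>)^N) \<le> th^n"
      using e0 by (simp add: exp_add add_pos_nonneg)
    moreover have "2 / a0 = 2 * exp (2*lam) * (1 + (4/\<epsilon>)^N)" unfolding a0_def
      by (simp add: exp_minus field_simps)
    ultimately have "2 / a0 \<le> th^n" by simp
    thus ?thesis using a0pos th1 by (simp add: field_simps)
  qed
  show ?thesis
  proof (cases "y \<le> h")
    case True
    have st: "F y \<le> Fm * (1 - (1 - 1 / th ^ n) * stay_prob p {0<..<h} n y)"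
      by (rule S_stop[OF pr01 th1(1) Fle Fm0 sub True])
    define s where "s = stay_prob p {0<..<h} n y"
    have s01: "0 \<le> s \<and> s \<le> 1" unfolding s_def by (rule S_bounds[where p=p, OF pr01])
    have Fmpos: "0 < Fm" unfolding Fm_def using Kpos by (simp add: add_pos_pos)
    have "a0 \<le> F y / Fm" using Fge[OF True] Fmpos Fmeq by (metis divide_right_mono less_imp_le)
    also have "F y / Fm \<le> 1 - (1 - 1 / th ^ n) * s" using st Fmpos unfolding s_def by (simp add: divide_le_eq mult.commute)
    finally have "(1 - 1 / th ^ n) * s \<le> 1 - a0" by linarith
    moreover have "(1 - a0/2) * s \<le> (1 - 1 / th ^ n) * s" using thn s01 by (intro mult_right_mono) auto
    ultimately have "(1 - a0/2) * s \<le> 1 - a0" by linarith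
    moreover have "(1 - a0/2) * (1 - a0/2) \<ge> 1 - a0" by (simp add: algebra_simps power2_eq_square)
    ultimately have "(1 - a0/2) * s \<le> (1 - a0/2) * (1 - a0/2)" by linarith
    hence "s \<le> 1 - a0/2" using a0pos by (simp add: mult_le_cancel_left)
    thus ?thesis unfolding s_def n_def a0_def by simp
  next
    case False
    hence "y \<notin> {0<..<h}" by auto
    hence "stay_prob p {0<..<h} (2 * h^2) y = 0" by (rule S_out)
    moreover have "a0 / 2 \<le> 1" using a0pos by simp
    ultimately show ?thesis unfolding a0_def by simp
  qed
qed

lemma good_cosh:
  fixes lam px :: real and h x :: nat
  assumes lam: "0 < lam" "lam \<le> real h" and x: "0 < x" and px: "- 1 / (8 * real x) \<le> 2 * px - 1"
  shows "(1 + (lam / real h)^2 / 4) * cosh (lam * real x / real h) \<le>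
     px * cosh (lam * real (Suc x) / real h) + (1 - px) * cosh (lam * real (x - 1) / real h)"
proof -
  define u where "u = lam / real h"
  define a where "a = lam * real x / real h"
  have hpos: "0 < real h" using lam by linarith
  have u: "0 \<le> u" "u \<le> 1" unfolding u_def using lam hpos by (auto simp: field_simps)
  have a0: "0 \<le> a" unfolding a_def using lam hpos by simp
  have e1: "lam * real (Suc x) / real h = a + u" unfolding a_def u_def by (simp add: distrib_left add_divide_distrib)
  have e2: "lam * real (x - 1) / real h = a - u" unfolding a_def u_def using x by (simp add: of_nat_diff right_diff_distrib diff_divide_distrib)
  have P: "px * cosh (a + u) + (1 - px) * cosh (a - u) = cosh a * cosh u + (2*px - 1) * (sinh a * sinh u)"
    by (simp add: cosh_add cosh_diff algebra_simps)
  have sa: "0 \<le> sinh a * sinh u" using a0 u by simp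
  have "-(u^2/4) * cosh a \<le> - 1 / (8 * real x) * (sinh a * sinh u)"
  proof -
    have "sinh a * sinh u \<le> (a * cosh a) * (2 * u)"
      using sinh_le_cosh_mult[OF a0] sinh_le_2u[OF u] a0 u by (intro mult_mono) auto
    also have "\<dots> = 8 * real x * (u^2/4 * cosh a)" unfolding a_def u_def using hpos x
      by (simp add: field_simps power2_eq_square)
    finally have "sinh a * sinh u \<le> 8 * real x * (u^2/4 * cosh a)" .
    hence "1 / (8 * real x) * (sinh a * sinh u) \<le> u^2/4 * cosh a" using x
      by (simp add: field_simps)
    thus ?thesis by simp
  qed
  also have "\<dots> \<le> (2*px - 1) * (sinh a * sinh u)" using px sa by (intro mult_right_mono) auto
  finally have A: "-(u^2/4) * cosh a \<le> (2*px - 1) * (sinh a * sinh u)" .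
  have B: "cosh a * (1 + u^2/2) \<le> cosh a * cosh u" using cosh_lb[OF u(1)] by (intro mult_left_mono) auto
  have "(1 + u^2/4) * cosh a = cosh a * (1 + u^2/2) - (u^2/4) * cosh a" by (simp add: algebra_simps)
  also have "\<dots> \<le> cosh a * cosh u + (2*px - 1) * (sinh a * sinh u)" using A B by linarith
  finally show ?thesis unfolding e1 e2 P[symmetric] by (simp add: u_def a_def)
qed

lemma good_exp:
  fixes lam px :: real and h x :: nat
  assumes lam: "0 < lam" "lam \<le> real h" and x: "0 < x" and px: "2 * px - 1 \<le> 0"
  shows "(1 + (lam / real h)^2 / 4) * exp (- lam * real x / real h) \<le>
     px * exp (- lam * real (Suc x) / real h) + (1 - px) * exp (- lam * real (x - 1) / real h)"
proof -
  define u where "u = lam / real h"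
  define a where "a = lam * real x / real h"
  have hpos: "0 < real h" using lam by linarith
  have u: "0 \<le> u" "u \<le> 1" unfolding u_def using lam hpos by (auto simp: field_simps)
  have e0: "- lam * real x / real h = - a" unfolding a_def by simp
  have e1': "lam * real (Suc x) / real h = a + u" unfolding a_def u_def by (simp add: distrib_left add_divide_distrib)
  have e2': "lam * real (x - 1) / real h = a - u" unfolding a_def u_def using x by (simp add: of_nat_diff right_diff_distrib diff_divide_distrib)
  have e1: "- lam * real (Suc x) / real h = - a + - u" using e1' by (simp only: mult_minus_left minus_divide_left minus_add_distrib)
  have e2: "- lam * real (x - 1) / real h = - a + u" using e2' by (simp only: mult_minus_left minus_divide_left minus_diff_eq)
  have P: "px * exp (- a + - u) + (1 - px) * exp (- a + u) = exp (-a) * (cosh u - (2*px - 1) * sinh u)"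
  proof -
    have alg: "px*(E*V) + (1-px)*(E*U) = E*((U+V)/2 - (2*px-1)*((U-V)/2))" for E U V :: real
      by (simp add: field_simps)
    have "exp (- a + - u) = exp (-a) * exp (-u)" "exp (- a + u) = exp (-a) * exp u"
      by (simp_all only: exp_add)
    thus ?thesis using alg[of "exp (-a)" "exp (-u)" "exp u"]
      by (simp only: cosh_field_def sinh_field_def)
  qed
  have "1 + u^2/4 \<le> cosh u" using cosh_lb[OF u(1)] zero_le_power2[of u] by linarith
  also have "\<dots> \<le> cosh u - (2*px - 1) * sinh u" using px u by (simp add: mult_nonpos_nonneg)
  finally have "exp (-a) * (1 + u^2/4) \<le> exp (-a) * (cosh u - (2*px - 1) * sinh u)" by simp
  thus ?thesis unfolding e0 e1 e2 P by (simp add: u_def mult.commute)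
qed

lemma large_case:
  fixes p :: "nat \<Rightarrow> real" and F :: "real \<Rightarrow> nat \<Rightarrow> nat \<Rightarrow> real" and \<epsilon> :: real and N :: nat
  assumes pr: "\<And>x. 0 < x \<Longrightarrow> \<epsilon> \<le> p x \<and> p x \<le> 1 - \<epsilon>" and e0: "0 < \<epsilon>"
    and fbF: "\<And>lam h x. 0 < lam \<Longrightarrow> lam \<le> real h \<Longrightarrow> x \<le> h \<Longrightarrow>
        exp (-lam) \<le> F lam h x \<and> F lam h x \<le> exp lam"
    and goodF: "\<And>lam h x. 0 < lam \<Longrightarrow> lam \<le> real h \<Longrightarrow> N \<le> x \<Longrightarrow> 0 < x \<Longrightarrow> x < h \<Longrightarrow>
        (1 + (lam / real h)^2 / 4) * F lam h x \<le> p x * F lam h (Suc x) + (1 - p x) * F lam h (x - 1)"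
  shows "\<exists>\<rho> H. 0 < \<rho> \<and> \<rho> < 1 \<and> (\<forall>h y. H \<le> real h \<longrightarrow> stay_prob p {0<..<h} (2 * h^2) y \<le> \<rho>)"
proof -
  define lam where "lam = max 8 (ln (1 + (4/\<epsilon>)^N) + 1)"
  define a0 where "a0 = exp (-2*lam) / (1 + (4/\<epsilon>)^N)"
  have l8: "8 \<le> lam" and lL: "ln (1 + (4/\<epsilon>)^N) + 1 \<le> lam" unfolding lam_def by auto
  have a0: "0 < a0" unfolding a0_def using e0 by (simp add: add_pos_nonneg)
  have a1: "a0 \<le> 1"
  proof -
    have "exp (-2*lam) \<le> 1" using l8 by simp
    moreover have "1 \<le> 1 + (4/\<epsilon>)^N" using e0 by simp
    ultimately have "exp (-2*lam) \<le> 1 + (4/\<epsilon>)^N" by linarith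
    moreover have "0 < 1 + (4/\<epsilon>)^N" using e0 by (simp add: add_pos_nonneg)
    ultimately show "a0 \<le> 1" unfolding a0_def by (simp add: divide_le_eq del: exp_le_one_iff)
  qed
  have "\<forall>h y. lam \<le> real h \<longrightarrow> stay_prob p {0<..<h} (2 * h^2) y \<le> 1 - a0 / 2"
  proof (intro allI impI)
    fix h y assume hl: "lam \<le> real h"
    have lp: "0 < lam" using l8 by simp
    have fb': "\<And>x. x \<le> h \<Longrightarrow> exp (-lam) \<le> F lam h x \<and> F lam h x \<le> exp lam"
      using fbF[OF lp hl] by blast
    have gd': "\<And>x. N \<le> x \<Longrightarrow> 0 < x \<Longrightarrow> x < h \<Longrightarrow>
        (1 + (lam / real h)^2 / 4) * F lam h x \<le> p x * F lam h (Suc x) + (1 - p x) * F lam h (x - 1)"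
      using goodF[OF lp hl] by blast
    show "stay_prob p {0<..<h} (2 * h^2) y \<le> 1 - a0 / 2"
      unfolding a0_def by (rule large_h[OF pr e0 l8 lL hl fb' gd'])
  qed
  moreover have "0 < 1 - a0/2" "1 - a0/2 < 1" using a0 a1 by auto
  ultimately show ?thesis by blast
qed

lemma small_case:
  fixes p :: "nat \<Rightarrow> real" and \<epsilon> H :: real
  assumes pr: "\<And>x. 0 < x \<Longrightarrow> \<epsilon> \<le> p x \<and> p x \<le> 1 - \<epsilon>" and e0: "0 < \<epsilon>"
  shows "\<exists>\<rho>. 0 < \<rho> \<and> \<rho> < 1 \<and> (\<forall>h y. real h < H \<longrightarrow> stay_prob p {0<..<h} h y \<le> \<rho>)"
proof -
  have pr01: "0 \<le> p x \<and> p x \<le> 1" if "0 < x" for x using pr[OF that] e0 by linarith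
  have ep: "\<epsilon> \<le> p x" if "0 < x" for x using pr[OF that] by simp
  have e1: "\<epsilon> \<le> 1/2" using pr[of 1] by simp
  define k where "k = Suc (nat \<lceil>H\<rceil>)"
  have "\<forall>h y. real h < H \<longrightarrow> stay_prob p {0<..<h} h y \<le> 1 - \<epsilon>^k"
  proof (intro allI impI)
    fix h y assume hH: "real h < H"
    have "h \<le> k" unfolding k_def using hH by linarith
    hence "\<epsilon>^k \<le> \<epsilon>^h" using e0 e1 by (intro power_decreasing) auto
    moreover have "stay_prob p {0<..<h} h y \<le> 1 - \<epsilon>^h"
      by (rule S_ellip[OF pr01 ep]) (use e0 in auto)
    ultimately show "stay_prob p {0<..<h} h y \<le> 1 - \<epsilon>^k" by linarith
  qed
  moreover have "0 < \<epsilon>^k" using e0 by simp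
  moreover have "\<epsilon>^k \<le> 1/2"
  proof -
    obtain j where Suc: "k = Suc j" unfolding k_def by blast
    have "\<epsilon>^k = \<epsilon> * \<epsilon>^j" using Suc by simp
    also have "\<dots> \<le> \<epsilon> * 1" using e0 e1 by (intro mult_left_mono power_le_one) auto
    finally show ?thesis using e1 by simp
  qed
  ultimately show ?thesis by (intro exI[of _ "1 - \<epsilon>^k"]) auto
qed

lemma combine:
  fixes p :: "nat \<Rightarrow> real"
  assumes pr01: "\<And>x. 0 < x \<Longrightarrow> 0 \<le> p x \<and> p x \<le> 1"
    and r: "0 < \<rho>" "\<rho> < 1" and h: "1 \<le> h" and b: "1 \<le> b" "b \<le> m" "real b \<le> 2 * (real h)^2"
    and Sb: "\<And>y. stay_prob p {0<..<h} b y \<le> \<rho>"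
  shows "stay_prob p {0<..<h} m q \<le> exp (ln \<rho> / 4 * real m / (real h)^2)"
proof -
  define j where "j = m div b"
  have jb: "j * b \<le> m" unfolding j_def by (simp add: div_times_less_eq_dividend)
  have j1: "1 \<le> j" unfolding j_def using b by (simp add: div_greater_zero_iff Suc_le_eq)
  have mlt: "m < (j + 1) * b" 
  proof -
    have "m < b + (m div b) * b" using b by (intro dividend_less_div_times) auto
    thus ?thesis unfolding j_def by (simp add: algebra_simps)
  qed
  have "real m < real ((j+1) * b)" using mlt by linarith
  also have "\<dots> \<le> real (2 * j * b)" using j1 by (intro of_nat_mono) (simp add: mult_right_mono)
  finally have mj: "real m < 2 * real j * real b" by simp
  have hpos: "0 < real h" using h by simp
  have "real m / (4 * (real h)^2) \<le> real m / (2 * real b)"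
    using b hpos by (intro divide_left_mono) auto
  also have "\<dots> \<le> real j" using mj b by (simp add: divide_le_eq algebra_simps)
  finally have jm: "real m / (4 * (real h)^2) \<le> real j" .
  have lr: "ln \<rho> < 0" using r by simp
  have "stay_prob p {0<..<h} m q \<le> stay_prob p {0<..<h} (j * b) q" by (rule S_mono[OF pr01 jb])
  also have "\<dots> \<le> \<rho> ^ j" by (rule S_pow[OF pr01 Sb])
  also have "\<dots> = exp (real j * ln \<rho>)" using r by (simp add: exp_of_nat_mult[symmetric] exp_ln ln_realpow[symmetric])
  also have "\<dots> \<le> exp (real m / (4 * (real h)^2) * ln \<rho>)" 
  proof -
    have "real j * ln \<rho> \<le> real m / (4 * (real h)^2) * ln \<rho>" using jm lr by (intro mult_right_mono_neg) auto
    thus ?thesis by (simp only: exp_le_cancel_iff)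
  qed
  also have "real m / (4 * (real h)^2) * ln \<rho> = ln \<rho> / 4 * real m / (real h)^2" by (simp add: field_simps)
  finally show ?thesis .
qed

theorem lemma4p1:
  fixes p R :: "nat \<Rightarrow> real" and \<delta> \<epsilon> :: real
  assumes delta: "\<delta> \<ge> -1"
    and p_def: "\<And>x. x \<ge> 1 \<Longrightarrow> p x = (1 - \<delta> / (2 * real x) + R x / 2) / 2"
    and R_small: "R \<in> o(\<lambda>x. 1 / real x)"
    and eps: "\<epsilon> > 0" "\<And>x. x \<ge> 1 \<Longrightarrow> \<epsilon> \<le> p x \<and> p x \<le> 1 - \<epsilon>"
    and rec: "recurrent_walk p"
  shows "\<exists>K2>0. \<forall>h m q :: nat. h \<ge> 1 \<longrightarrow> real m \<ge> 2 * (real h)^2 \<longrightarrow> 0 < q \<longrightarrow> q < h \<longrightarrow>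
           stay_prob p {0<..<h} m q \<le> exp (- K2 * real m / (real h)^2)"
proof -
  have pr: "\<epsilon> \<le> p x \<and> p x \<le> 1 - \<epsilon>" if "0 < x" for x using eps(2)[of x] that by simp
  have pr01: "0 \<le> p x \<and> p x \<le> 1" if "0 < x" for x using pr[OF that] eps(1) by linarith
  have e0: "0 < \<epsilon>" by (rule eps(1))
  have twop: "2 * p x - 1 = - \<delta> / (2 * real x) + R x / 2" if "0 < x" for x
    using p_def[of x] that by simp
  have Rb: "\<exists>N0. \<forall>x\<ge>N0. \<bar>R x\<bar> \<le> c / real x" if c: "0 < c" for c
  proof -
    have "eventually (\<lambda>x. norm (R x) \<le> c * norm (1 / real x)) at_top"
      by (rule landau_o.smallD[OF R_small c])
    then obtain N0 where N0: "\<And>x. x \<ge> N0 \<Longrightarrow> norm (R x) \<le> c * norm (1 / real x)"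
      unfolding eventually_at_top_linorder by blast
    show ?thesis by (intro exI[of _ N0] allI impI) (use N0 in simp)
  qed
  have large: "\<exists>\<rho> H. 0 < \<rho> \<and> \<rho> < 1 \<and> (\<forall>h y. H \<le> real h \<longrightarrow> stay_prob p {0<..<h} (2 * h^2) y \<le> \<rho>)"
  proof (cases "\<delta> \<le> 0")
    case True
    obtain N0 where N0: "\<And>x. x \<ge> N0 \<Longrightarrow> \<bar>R x\<bar> \<le> (1/4) / real x" using Rb[of "1/4"] by auto
    show ?thesis
    proof (rule large_case[OF pr e0, where F = "\<lambda>lam h x. cosh (lam * real x / real h)" and N = "max N0 1"])
      fix lam :: real and h x :: nat
      assume l: "0 < lam" "lam \<le> real h" and xh: "x \<le> h"
      have hpos: "0 < real h" using l by linarith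
      define t where "t = lam * real x / real h"
      have t0: "0 \<le> t" unfolding t_def using l by simp
      have tl: "t \<le> lam" unfolding t_def using l xh hpos by (simp add: divide_le_eq mult_left_mono)
      have "cosh t \<le> cosh lam" using t0 tl l by (simp add: cosh_real_nonneg_le_iff)
      also have "cosh lam \<le> exp lam" unfolding cosh_field_def using l by simp
      finally have u: "cosh t \<le> exp lam" .
      have "exp (-lam) \<le> 1" using l by simp
      with cosh_real_ge_1[of t] u show "exp (- lam) \<le> cosh (lam * real x / real h) \<and> cosh (lam * real x / real h) \<le> exp lam"
        unfolding t_def by linarith
    next
      fix lam :: real and h x :: nat
      assume l: "0 < lam" "lam \<le> real h" and x: "max N0 1 \<le> x" "0 < x" "x < h"
      have Rx: "\<bar>R x\<bar> \<le> (1/4) / real x" using N0 x by auto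
      have xp: "0 < real x" using x by simp
      have "- 1 / (8 * real x) \<le> R x / 2" using Rx xp by (simp add: field_simps abs_le_iff)
      also have "\<dots> \<le> 2 * p x - 1" using twop[OF x(2)] True xp by (simp add: divide_nonpos_pos)
      finally have px: "- 1 / (8 * real x) \<le> 2 * p x - 1" .
      show "(1 + (lam / real h)^2 / 4) * cosh (lam * real x / real h) \<le>
         p x * cosh (lam * real (Suc x) / real h) + (1 - p x) * cosh (lam * real (x - 1) / real h)"
        by (rule good_cosh[OF l x(2) px])
    qed
  next
    case False
    hence dp: "0 < \<delta>" by simp
    obtain N0 where N0: "\<And>x. x \<ge> N0 \<Longrightarrow> \<bar>R x\<bar> \<le> \<delta> / real x" using Rb[OF dp] by auto
    show ?thesis
    proof (rule large_case[OF pr e0, where F = "\<lambda>lam h x. exp (- lam * real x / real h)" and N = "max N0 1"])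
      fix lam :: real and h x :: nat
      assume l: "0 < lam" "lam \<le> real h" and xh: "x \<le> h"
      have hpos: "0 < real h" using l by linarith
      define t where "t = lam * real x / real h"
      have t0: "0 \<le> t" unfolding t_def using l by simp
      have tl: "t \<le> lam" unfolding t_def using l xh hpos by (simp add: divide_le_eq mult_left_mono)
      have e: "- lam * real x / real h = - t" unfolding t_def by simp
      show "exp (- lam) \<le> exp (- lam * real x / real h) \<and> exp (- lam * real x / real h) \<le> exp lam"
        unfolding e using t0 tl l by simp
    next
      fix lam :: real and h x :: nat
      assume l: "0 < lam" "lam \<le> real h" and x: "max N0 1 \<le> x" "0 < x" "x < h"
      have Rx: "\<bar>R x\<bar> \<le> \<delta> / real x" using N0 x by auto
      have xp: "0 < real x" using x by simp
      have "2 * p x - 1 = - \<delta> / (2 * real x) + R x / 2" by (rule twop[OF x(2)])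
      also have "R x / 2 \<le> \<delta> / (2 * real x)" using Rx xp by (simp add: field_simps abs_le_iff)
      hence "- \<delta> / (2 * real x) + R x / 2 \<le> 0" by simp
      finally have px: "2 * p x - 1 \<le> 0" by simp
      show "(1 + (lam / real h)^2 / 4) * exp (- lam * real x / real h) \<le>
         p x * exp (- lam * real (Suc x) / real h) + (1 - p x) * exp (- lam * real (x - 1) / real h)"
        by (rule good_exp[OF l x(2) px])
    qed
  qed
  then obtain \<rho>1 H where r1: "0 < \<rho>1" "\<rho>1 < 1"
    and L': "\<forall>h y. H \<le> real h \<longrightarrow> stay_prob p {0<..<h} (2 * h^2) y \<le> \<rho>1" by (elim exE conjE)
  have L: "stay_prob p {0<..<h} (2 * h^2) y \<le> \<rho>1" if "H \<le> real h" for h y using L' that by simp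
  have sc: "\<exists>\<rho>. 0 < \<rho> \<and> \<rho> < 1 \<and> (\<forall>h y. real h < H \<longrightarrow> stay_prob p {0<..<h} h y \<le> \<rho>)"
    by (rule small_case[OF pr e0])
  then obtain \<rho>2 where r2: "0 < \<rho>2" "\<rho>2 < 1"
    and Sm': "\<forall>h y. real h < H \<longrightarrow> stay_prob p {0<..<h} h y \<le> \<rho>2" by (elim exE conjE)
  have Sm: "stay_prob p {0<..<h} h y \<le> \<rho>2" if "real h < H" for h y using Sm' that by simp
  define \<rho> where "\<rho> = max \<rho>1 \<rho>2"
  have r: "0 < \<rho>" "\<rho> < 1" unfolding \<rho>_def using r1 r2 by auto
  show ?thesis
  proof (intro exI[of _ "- ln \<rho> / 4"] conjI allI impI)
    show "0 < - ln \<rho> / 4" using r by simp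
    fix h m q :: nat
    assume h: "1 \<le> h" and m: "2 * (real h)^2 \<le> real m" and q: "0 < q" "q < h"
    have eq: "exp (- (- ln \<rho> / 4) * real m / (real h)^2) = exp (ln \<rho> / 4 * real m / (real h)^2)" by simp
    have hh: "real h \<le> 2 * (real h)^2"
    proof -
      have "real h * 1 \<le> real h * (2 * real h)" using h by (intro mult_left_mono) auto
      thus ?thesis by (simp add: power2_eq_square algebra_simps)
    qed
    have main: "stay_prob p {0<..<h} m q \<le> exp (ln \<rho> / 4 * real m / (real h)^2)"
    proof (cases "H \<le> real h")
      case True
      have b1: "1 \<le> 2 * h^2" using h by simp
      have "real (2 * h^2) \<le> real m" using m by simp
      hence b2: "2 * h^2 \<le> m" by (simp only: of_nat_le_iff)
      have Sb: "stay_prob p {0<..<h} (2 * h^2) y \<le> \<rho>" for y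
        using L[OF True, of y] unfolding \<rho>_def by linarith
      have b3: "real (2 * h^2) \<le> 2 * (real h)^2" by (simp only: of_nat_mult of_nat_power of_nat_numeral order_refl)
      show ?thesis by (rule combine[OF pr01 r h b1 b2 b3 Sb])
    next
      case False
      have b2: "h \<le> m" using m hh by linarith
      have hl: "real h < H" using False by simp
      have Sb: "stay_prob p {0<..<h} h y \<le> \<rho>" for y
        using Sm[OF hl, of y] unfolding \<rho>_def by linarith
      show ?thesis by (rule combine[OF pr01 r h h b2 hh Sb])
    qed
    show "stay_prob p {0<..<h} m q \<le> exp (- (- ln \<rho> / 4) * real m / (real h)^2)"
      using main eq by linarith
  qed
qed

end
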